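(* Let $L\subseteq Q$ be a dense extension of Lie algebras with $Q$ multiplicatively semiprime. Then $A_0$ is a semiprime associative algebra.
   Context: Lie algebras over a commutative unital ring $\Phi$. $\mathrm{ad}_x(y)=[x,y]$; $A(Q)$ is the associative subalgebra of $\mathrm{End}_\Phi(Q)$ generated by all $\mathrm{ad}_x$, $x\in Q$; $M(Q)$ is the subalgebra generated by the identity and all $\mathrm{ad}_x$. $A_0=\{\mu\in A(Q):\mu(L)\subseteq L\}$. An extension $L\subseteq Q$ is dense if the only $\mu\in M(Q)$ with $\mu(L)=0$ is $\mu=0$. A Lie algebra $Q$ is semiprime if $[I,I]\ne0$ for every nonzero ideal $I$; $Q$ is multiplicatively semiprime if both $Q$ and the associative algebra $M(Q)$ are semiprime. *)

theory Defs
  imports Main "HOL.Modules"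
begin

definition lie_algebra :: "('r::comm_ring_1 \<Rightarrow> 'q::ab_group_add \<Rightarrow> 'q) \<Rightarrow> ('q \<Rightarrow> 'q \<Rightarrow> 'q) \<Rightarrow> bool" where
  "lie_algebra s br \<longleftrightarrow> module s
     \<and> (\<forall>x y z. br (x + y) z = br x z + br y z)
     \<and> (\<forall>x y z. br x (y + z) = br x y + br x z)
     \<and> (\<forall>c x y. br (s c x) y = s c (br x y))
     \<and> (\<forall>c x y. br x (s c y) = s c (br x y))
     \<and> (\<forall>x. br x x = 0)
     \<and> (\<forall>x y z. br x (br y z) + br y (br z x) + br z (br x y) = 0)"

definition lie_subalgebra :: "('r::comm_ring_1 \<Rightarrow> 'q::ab_group_add \<Rightarrow> 'q) \<Rightarrow> ('q \<Rightarrow> 'q \<Rightarrow> 'q) \<Rightarrow> 'q set \<Rightarrow> bool" where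
  "lie_subalgebra s br L \<longleftrightarrow> 0 \<in> L \<and> (\<forall>x\<in>L. \<forall>y\<in>L. x + y \<in> L)
     \<and> (\<forall>c. \<forall>x\<in>L. s c x \<in> L) \<and> (\<forall>x\<in>L. \<forall>y\<in>L. br x y \<in> L)"

definition lie_ideal :: "('r::comm_ring_1 \<Rightarrow> 'q::ab_group_add \<Rightarrow> 'q) \<Rightarrow> ('q \<Rightarrow> 'q \<Rightarrow> 'q) \<Rightarrow> 'q set \<Rightarrow> bool" where
  "lie_ideal s br I \<longleftrightarrow> 0 \<in> I \<and> (\<forall>x\<in>I. \<forall>y\<in>I. x + y \<in> I)
     \<and> (\<forall>c. \<forall>x\<in>I. s c x \<in> I) \<and> (\<forall>x. \<forall>y\<in>I. br x y \<in> I)"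

text \<open>Q semiprime: [I,I] \<noteq> 0 for every nonzero ideal I ([I,I] is spanned by the brackets).\<close>
definition lie_semiprime :: "('r::comm_ring_1 \<Rightarrow> 'q::ab_group_add \<Rightarrow> 'q) \<Rightarrow> ('q \<Rightarrow> 'q \<Rightarrow> 'q) \<Rightarrow> bool" where
  "lie_semiprime s br \<longleftrightarrow>
     (\<forall>I. lie_ideal s br I \<and> I \<noteq> {0} \<longrightarrow> (\<exists>a\<in>I. \<exists>b\<in>I. br a b \<noteq> 0))"

inductive_set assoc_gen :: "('r::comm_ring_1 \<Rightarrow> 'q::ab_group_add \<Rightarrow> 'q) \<Rightarrow> ('q \<Rightarrow> 'q) set \<Rightarrow> ('q \<Rightarrow> 'q) set"
  for s :: "'r \<Rightarrow> 'q \<Rightarrow> 'q" and G :: "('q \<Rightarrow> 'q) set" where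
  gen: "f \<in> G \<Longrightarrow> f \<in> assoc_gen s G"
| zero: "(\<lambda>_. 0) \<in> assoc_gen s G"
| add: "f \<in> assoc_gen s G \<Longrightarrow> g \<in> assoc_gen s G \<Longrightarrow> (\<lambda>v. f v + g v) \<in> assoc_gen s G"
| smult: "f \<in> assoc_gen s G \<Longrightarrow> (\<lambda>v. s c (f v)) \<in> assoc_gen s G"
| comp: "f \<in> assoc_gen s G \<Longrightarrow> g \<in> assoc_gen s G \<Longrightarrow> f \<circ> g \<in> assoc_gen s G"

definition A_alg :: "('r::comm_ring_1 \<Rightarrow> 'q::ab_group_add \<Rightarrow> 'q) \<Rightarrow> ('q \<Rightarrow> 'q \<Rightarrow> 'q) \<Rightarrow> ('q \<Rightarrow> 'q) set" where
  "A_alg s br = assoc_gen s (range br)"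

definition M_alg :: "('r::comm_ring_1 \<Rightarrow> 'q::ab_group_add \<Rightarrow> 'q) \<Rightarrow> ('q \<Rightarrow> 'q \<Rightarrow> 'q) \<Rightarrow> ('q \<Rightarrow> 'q) set" where
  "M_alg s br = assoc_gen s (insert id (range br))"

definition A0 :: "('r::comm_ring_1 \<Rightarrow> 'q::ab_group_add \<Rightarrow> 'q) \<Rightarrow> ('q \<Rightarrow> 'q \<Rightarrow> 'q) \<Rightarrow> 'q set \<Rightarrow> ('q \<Rightarrow> 'q) set" where
  "A0 s br L = {\<mu> \<in> A_alg s br. \<mu> ` L \<subseteq> L}"

definition dense_ext :: "('r::comm_ring_1 \<Rightarrow> 'q::ab_group_add \<Rightarrow> 'q) \<Rightarrow> ('q \<Rightarrow> 'q \<Rightarrow> 'q) \<Rightarrow> 'q set \<Rightarrow> bool" where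
  "dense_ext s br L \<longleftrightarrow> (\<forall>\<mu>\<in>M_alg s br. (\<forall>x\<in>L. \<mu> x = 0) \<longrightarrow> \<mu> = (\<lambda>_. 0))"

definition assoc_subalgebra :: "('r::comm_ring_1 \<Rightarrow> 'q::ab_group_add \<Rightarrow> 'q) \<Rightarrow> ('q \<Rightarrow> 'q) set \<Rightarrow> bool" where
  "assoc_subalgebra s R \<longleftrightarrow> (\<lambda>_. 0) \<in> R \<and> (\<forall>f\<in>R. \<forall>g\<in>R. (\<lambda>v. f v + g v) \<in> R)
     \<and> (\<forall>c. \<forall>f\<in>R. (\<lambda>v. s c (f v)) \<in> R) \<and> (\<forall>f\<in>R. \<forall>g\<in>R. f \<circ> g \<in> R)"

definition assoc_ideal :: "('r::comm_ring_1 \<Rightarrow> 'q::ab_group_add \<Rightarrow> 'q) \<Rightarrow> ('q \<Rightarrow> 'q) set \<Rightarrow> ('q \<Rightarrow> 'q) set \<Rightarrow> bool" where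
  "assoc_ideal s R I \<longleftrightarrow> I \<subseteq> R \<and> (\<lambda>_. 0) \<in> I \<and> (\<forall>f\<in>I. \<forall>g\<in>I. (\<lambda>v. f v + g v) \<in> I)
     \<and> (\<forall>c. \<forall>f\<in>I. (\<lambda>v. s c (f v)) \<in> I) \<and> (\<forall>a\<in>R. \<forall>f\<in>I. a \<circ> f \<in> I \<and> f \<circ> a \<in> I)"

text \<open>Semiprime associative algebra: no nonzero ideal I with I*I = 0
  (I*I is spanned by the products, so I*I = 0 iff all products vanish).\<close>
definition assoc_semiprime :: "('r::comm_ring_1 \<Rightarrow> 'q::ab_group_add \<Rightarrow> 'q) \<Rightarrow> ('q \<Rightarrow> 'q) set \<Rightarrow> bool" where
  "assoc_semiprime s R \<longleftrightarrow>
     (\<forall>I. assoc_ideal s R I \<and> (\<forall>f\<in>I. \<forall>g\<in>I. f \<circ> g = (\<lambda>_. 0)) \<longrightarrow> I = {\<lambda>_. 0})"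

definition mult_semiprime :: "('r::comm_ring_1 \<Rightarrow> 'q::ab_group_add \<Rightarrow> 'q) \<Rightarrow> ('q \<Rightarrow> 'q \<Rightarrow> 'q) \<Rightarrow> bool" where
  "mult_semiprime s br \<longleftrightarrow> lie_semiprime s br \<and> assoc_semiprime s (M_alg s br)"

end

theory Submission
  imports Defs
begin

definition lin :: "('r::comm_ring_1 \<Rightarrow> 'q::ab_group_add \<Rightarrow> 'q) \<Rightarrow> ('q \<Rightarrow> 'q) \<Rightarrow> bool" where
  "lin s f \<longleftrightarrow> (\<forall>a b. f (a + b) = f a + f b) \<and> (\<forall>c a. f (s c a) = s c (f a))"

lemma la_facts:
  assumes "lie_algebra s br"
  shows la_mod: "module s" and la_addl: "br (x + y) z = br x z + br y z"
    and la_addr: "br x (y + z) = br x y + br x z"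
    and la_scr: "br x (s c y) = s c (br x y)" and la_diag: "br x x = 0"
  using assms unfolding lie_algebra_def by simp_all

lemma ideal_sub: "assoc_ideal s R I \<Longrightarrow> I \<subseteq> R"
  by (simp add: assoc_ideal_def)
lemma ideal_zero: "assoc_ideal s R I \<Longrightarrow> (\<lambda>_. 0) \<in> I"
  by (simp add: assoc_ideal_def)
lemma ideal_left: "assoc_ideal s R I \<Longrightarrow> a \<in> R \<Longrightarrow> f \<in> I \<Longrightarrow> a \<circ> f \<in> I"
  by (simp add: assoc_ideal_def)

lemma lin_zero: "lin s f \<Longrightarrow> f 0 = 0"
proof -
  assume "lin s f"
  then have "f (0 + 0) = f 0 + f 0" unfolding lin_def by blast
  then show ?thesis by simp
qed

lemma lin_minus: "lin s f \<Longrightarrow> f (- a) = - f a"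
proof -
  assume a: "lin s f"
  have "f (a + - a) = f a + f (- a)" using a unfolding lin_def by blast
  then have "f a + f (- a) = f (a + - a)" by simp
  also have "\<dots> = 0" using lin_zero[OF a] by simp
  finally show ?thesis by (simp add: eq_neg_iff_add_eq_0 add.commute)
qed

lemma lin_M:
  assumes la: "lie_algebra s br" and f: "f \<in> assoc_gen s (insert id (range br))"
  shows "lin s f"
  using f
proof induction
  case (gen f)
  note r = la_addr[OF la] and sc = la_scr[OF la]
  from gen show ?case
  proof
    assume "f = id" then show ?thesis unfolding lin_def by simp
  next
    assume "f \<in> range br"
    then obtain x where "f = br x" by blast
    then show ?thesis unfolding lin_def by (simp add: r sc)
  qed
next
  case zero
  have "module s" using la_mod[OF la] .
  then show ?case unfolding lin_def by (simp add: module.scale_zero_right)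
next
  case (add f g)
  have m: "module s" using la_mod[OF la] .
  show ?case unfolding lin_def
  proof (intro conjI allI)
    fix a b show "f (a + b) + g (a + b) = f a + g a + (f b + g b)"
      using add.IH unfolding lin_def by (simp add: algebra_simps)
  next
    fix c a show "f (s c a) + g (s c a) = s c (f a + g a)"
      using add.IH m unfolding lin_def by (simp add: module.scale_right_distrib)
  qed
next
  case (smult f c)
  have m: "module s" using la_mod[OF la] .
  show ?case unfolding lin_def
  proof (intro conjI allI)
    fix a b show "s c (f (a + b)) = s c (f a) + s c (f b)"
      using smult.IH m unfolding lin_def by (simp add: module.scale_right_distrib)
  next
    fix d a have "f (s d a) = s d (f a)" using smult.IH unfolding lin_def by blast
    then show "s c (f (s d a)) = s d (s c (f a))"
      using module.scale_left_commute[OF m] by simp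
  qed
next
  case (comp f g)
  have f1: "\<And>a b. f (a + b) = f a + f b" and f2: "\<And>c a. f (s c a) = s c (f a)"
    and g1: "\<And>a b. g (a + b) = g a + g b" and g2: "\<And>c a. g (s c a) = s c (g a)"
    using comp.IH unfolding lin_def by blast+
  show ?case unfolding lin_def comp_apply by (simp add: f1 f2 g1 g2)
qed

lemma A_sub_M: "A_alg s br \<subseteq> M_alg s br"
proof
  fix f assume "f \<in> A_alg s br"
  then show "f \<in> M_alg s br" unfolding A_alg_def M_alg_def
  proof induction
    case (gen f) then show ?case by (intro assoc_gen.gen) blast
  next
    case zero then show ?case by (rule assoc_gen.zero)
  next
    case (add f g) from add.IH show ?case by (rule assoc_gen.add)
  next
    case (smult f c) from smult.IH show ?case by (rule assoc_gen.smult)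
  next
    case (comp f g) from comp.IH show ?case by (rule assoc_gen.comp)
  qed
qed

lemma br_anti:
  assumes la: "lie_algebra s br" shows "br a b = - br b a"
proof -
  note l = la_addl[OF la] and r = la_addr[OF la] and d = la_diag[OF la]
  have "0 = br (a + b) (a + b)" by (simp only: d)
  also have "\<dots> = br a a + br a b + (br b a + br b b)" by (simp only: l r) (simp add: ac_simps)
  also have "\<dots> = br a b + br b a" by (simp only: d add_0 add_0_right)
  finally have "br a b + br b a = 0" by simp
  then show ?thesis by (simp add: eq_neg_iff_add_eq_0)
qed

lemma ideal_Inter:
  assumes "\<forall>J\<in>F. assoc_ideal s R J" "F \<noteq> {}"
  shows "assoc_ideal s R (\<Inter>F)"
proof -
  obtain J0 where J0: "J0 \<in> F" using assms(2) by blast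
  show ?thesis unfolding assoc_ideal_def
  proof (intro conjI ballI allI)
    show "\<Inter>F \<subseteq> R" using J0 assms(1) ideal_sub by blast
    show "(\<lambda>_. 0) \<in> \<Inter>F" using assms(1) ideal_zero by blast
  next
    fix f g assume "f \<in> \<Inter>F" "g \<in> \<Inter>F"
    then show "(\<lambda>v. f v + g v) \<in> \<Inter>F" using assms(1) unfolding assoc_ideal_def by simp
  next
    fix c f assume "f \<in> \<Inter>F"
    then show "(\<lambda>v. s c (f v)) \<in> \<Inter>F" using assms(1) unfolding assoc_ideal_def by simp
  next
    fix a f assume "a \<in> R" "f \<in> \<Inter>F"
    then show "a \<circ> f \<in> \<Inter>F" "f \<circ> a \<in> \<Inter>F" using assms(1) unfolding assoc_ideal_def by simp_all
  qed
qed

lemma zc: "(k \<circ> \<rho> \<circ> f = (\<lambda>_. 0)) \<longleftrightarrow> (\<forall>v. k (\<rho> (f v)) = 0)"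
  by (simp add: fun_eq_iff)

lemma lin_comp: "lin s f \<Longrightarrow> lin s g \<Longrightarrow> lin s (f \<circ> g)"
  unfolding lin_def by simp

lemma semiprime_lemma:
  assumes sp: "assoc_semiprime s R"
    and cl: "assoc_subalgebra s R"
    and idR: "id \<in> R"
    and linR: "\<forall>f\<in>R. lin s f"
    and md: "module s"
    and muR: "\<mu> \<in> R"
    and hyp: "\<forall>\<rho>\<in>R. \<forall>v. \<mu> (\<rho> (\<mu> v)) = 0"
  shows "\<mu> = (\<lambda>_. 0)"
proof -
  have c0: "(\<lambda>_. 0) \<in> R" and cadd: "\<And>f g. f \<in> R \<Longrightarrow> g \<in> R \<Longrightarrow> (\<lambda>v. f v + g v) \<in> R"
    and csm: "\<And>c f. f \<in> R \<Longrightarrow> (\<lambda>v. s c (f v)) \<in> R"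
    and ccomp: "\<And>f g. f \<in> R \<Longrightarrow> g \<in> R \<Longrightarrow> f \<circ> g \<in> R"
    using cl unfolding assoc_subalgebra_def by blast+
  have s0: "\<And>c. s c 0 = 0" using md by (simp add: module.scale_zero_right)
  define K where "K = \<Inter>{J. assoc_ideal s R J \<and> \<mu> \<in> J}"
  have Rid: "assoc_ideal s R R" using cl unfolding assoc_ideal_def assoc_subalgebra_def by blast
  have Kid: "assoc_ideal s R K" unfolding K_def
    by (rule ideal_Inter) (use Rid muR in auto)
  have Kmin: "K \<subseteq> J" if "assoc_ideal s R J" "\<mu> \<in> J" for J
    using that unfolding K_def by blast
  have KR: "K \<subseteq> R" using ideal_sub[OF Kid] .
  have Uid: "assoc_ideal s R {\<nu> \<in> R. \<forall>\<rho>\<in>R. \<forall>v. k (\<rho> (\<nu> v)) = 0}" if kR: "k \<in> R" for k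
    unfolding assoc_ideal_def
  proof (intro conjI ballI allI)
    show "(\<lambda>_. 0) \<in> {\<nu> \<in> R. \<forall>\<rho>\<in>R. \<forall>v. k (\<rho> (\<nu> v)) = 0}"
    proof -
      have "k (\<rho> 0) = 0" if "\<rho> \<in> R" for \<rho>
      proof -
        have "\<rho> 0 = 0" using lin_zero[of s \<rho>] linR that by blast
        moreover have "k 0 = 0" using lin_zero[of s k] linR kR by blast
        ultimately show ?thesis by simp
      qed
      then show ?thesis using c0 by simp
    qed
  next
    fix f g assume f: "f \<in> {\<nu> \<in> R. \<forall>\<rho>\<in>R. \<forall>v. k (\<rho> (\<nu> v)) = 0}"
      and g: "g \<in> {\<nu> \<in> R. \<forall>\<rho>\<in>R. \<forall>v. k (\<rho> (\<nu> v)) = 0}"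
    have "k (\<rho> (f v + g v)) = 0" if "\<rho> \<in> R" for \<rho> v
    proof -
      have "lin s (k \<circ> \<rho>)" using linR kR that lin_comp by blast
      then have "k (\<rho> (f v + g v)) = k (\<rho> (f v)) + k (\<rho> (g v))" unfolding lin_def by simp
      then show ?thesis using f g that by simp
    qed
    then show "(\<lambda>v. f v + g v) \<in> {\<nu> \<in> R. \<forall>\<rho>\<in>R. \<forall>v. k (\<rho> (\<nu> v)) = 0}"
      using f g cadd by blast
  next
    fix c f assume f: "f \<in> {\<nu> \<in> R. \<forall>\<rho>\<in>R. \<forall>v. k (\<rho> (\<nu> v)) = 0}"
    have "k (\<rho> (s c (f v))) = 0" if "\<rho> \<in> R" for \<rho> v
    proof -
      have "lin s (k \<circ> \<rho>)" using linR kR that lin_comp by blast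
      then have "k (\<rho> (s c (f v))) = s c (k (\<rho> (f v)))" unfolding lin_def by simp
      then show ?thesis using f that s0 by simp
    qed
    then show "(\<lambda>v. s c (f v)) \<in> {\<nu> \<in> R. \<forall>\<rho>\<in>R. \<forall>v. k (\<rho> (\<nu> v)) = 0}"
      using f csm by blast
  next
    fix a f assume a: "a \<in> R" and f: "f \<in> {\<nu> \<in> R. \<forall>\<rho>\<in>R. \<forall>v. k (\<rho> (\<nu> v)) = 0}"
    have "k (\<rho> (a (f v))) = 0" if "\<rho> \<in> R" for \<rho> v
    proof -
      have "\<rho> \<circ> a \<in> R" using that a ccomp by blast
      then show ?thesis using f by fastforce
    qed
    moreover have "k (\<rho> (f (a v))) = 0" if "\<rho> \<in> R" for \<rho> v
      using f that by blast
    ultimately show "a \<circ> f \<in> {\<nu> \<in> R. \<forall>\<rho>\<in>R. \<forall>v. k (\<rho> (\<nu> v)) = 0}"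
      and "f \<circ> a \<in> {\<nu> \<in> R. \<forall>\<rho>\<in>R. \<forall>v. k (\<rho> (\<nu> v)) = 0}"
      using a f ccomp by auto
  qed blast
  have Vid: "assoc_ideal s R {\<nu> \<in> R. \<forall>\<rho>\<in>R. \<forall>v. \<nu> (\<rho> (k v)) = 0}" if kR: "k \<in> R" for k
    unfolding assoc_ideal_def
  proof (intro conjI ballI allI)
    show "(\<lambda>_. 0) \<in> {\<nu> \<in> R. \<forall>\<rho>\<in>R. \<forall>v. \<nu> (\<rho> (k v)) = 0}"
      using c0 by simp
  next
    fix f g assume f: "f \<in> {\<nu> \<in> R. \<forall>\<rho>\<in>R. \<forall>v. \<nu> (\<rho> (k v)) = 0}"
      and g: "g \<in> {\<nu> \<in> R. \<forall>\<rho>\<in>R. \<forall>v. \<nu> (\<rho> (k v)) = 0}"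
    then show "(\<lambda>v. f v + g v) \<in> {\<nu> \<in> R. \<forall>\<rho>\<in>R. \<forall>v. \<nu> (\<rho> (k v)) = 0}"
      using cadd by simp
  next
    fix c f assume f: "f \<in> {\<nu> \<in> R. \<forall>\<rho>\<in>R. \<forall>v. \<nu> (\<rho> (k v)) = 0}"
    then show "(\<lambda>v. s c (f v)) \<in> {\<nu> \<in> R. \<forall>\<rho>\<in>R. \<forall>v. \<nu> (\<rho> (k v)) = 0}"
      using csm s0 by simp
  next
    fix a f assume a: "a \<in> R" and f: "f \<in> {\<nu> \<in> R. \<forall>\<rho>\<in>R. \<forall>v. \<nu> (\<rho> (k v)) = 0}"
    have a0: "a 0 = 0" using a linR lin_zero by blast
    have "a (f (\<rho> (k v))) = 0" if "\<rho> \<in> R" for \<rho> v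
      using f that a0 by simp
    moreover have "f (a (\<rho> (k v))) = 0" if "\<rho> \<in> R" for \<rho> v
    proof -
      have "a \<circ> \<rho> \<in> R" using that a ccomp by blast
      then show ?thesis using f by fastforce
    qed
    ultimately show "a \<circ> f \<in> {\<nu> \<in> R. \<forall>\<rho>\<in>R. \<forall>v. \<nu> (\<rho> (k v)) = 0}"
      and "f \<circ> a \<in> {\<nu> \<in> R. \<forall>\<rho>\<in>R. \<forall>v. \<nu> (\<rho> (k v)) = 0}"
      using a f ccomp by auto
  qed blast
  have step1: "\<forall>k\<in>K. \<forall>\<rho>\<in>R. \<forall>v. \<mu> (\<rho> (k v)) = 0"
  proof -
    have "K \<subseteq> {\<nu> \<in> R. \<forall>\<rho>\<in>R. \<forall>v. \<mu> (\<rho> (\<nu> v)) = 0}"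
      by (rule Kmin[OF Uid[OF muR]]) (use muR hyp in blast)
    then show ?thesis by blast
  qed
  have step2: "k' (\<rho> (k v)) = 0" if k: "k \<in> K" and k': "k' \<in> K" and r: "\<rho> \<in> R" for k k' \<rho> v
  proof -
    have "K \<subseteq> {\<nu> \<in> R. \<forall>\<rho>\<in>R. \<forall>v. \<nu> (\<rho> (k v)) = 0}"
      by (rule Kmin[OF Vid]) (use k KR muR step1 in blast)+
    then show ?thesis using k' r by blast
  qed
  have "\<forall>f\<in>K. \<forall>g\<in>K. f \<circ> g = (\<lambda>_. 0)"
    using step2[where \<rho>=id] idR by (auto simp: fun_eq_iff)
  then have "K = {\<lambda>_. 0}" using sp Kid unfolding assoc_semiprime_def by blast
  moreover have "\<mu> \<in> K" unfolding K_def by blast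
  ultimately show ?thesis by blast
qed

theorem mainTheorem15:
  fixes s :: "'r::comm_ring_1 \<Rightarrow> 'q::ab_group_add \<Rightarrow> 'q"
    and br :: "'q \<Rightarrow> 'q \<Rightarrow> 'q"
    and L :: "'q set"
  assumes "lie_algebra s br"
    and "lie_subalgebra s br L"
    and "dense_ext s br L"
    and "mult_semiprime s br"
  shows "assoc_subalgebra s (A0 s br L) \<and> assoc_semiprime s (A0 s br L)"
proof -
  note la = assms(1)
  have md: "module s" using la_mod[OF la] .
  have s0: "\<And>c. s c 0 = 0" using md by (simp add: module.scale_zero_right)
  have L0: "0 \<in> L" and Ladd: "\<And>x y. x \<in> L \<Longrightarrow> y \<in> L \<Longrightarrow> x + y \<in> L"
    and Lsm: "\<And>c x. x \<in> L \<Longrightarrow> s c x \<in> L" and Lbr: "\<And>x y. x \<in> L \<Longrightarrow> y \<in> L \<Longrightarrow> br x y \<in> L"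
    using assms(2) unfolding lie_subalgebra_def by blast+
  have dense: "\<And>\<mu>. \<mu> \<in> M_alg s br \<Longrightarrow> (\<forall>x\<in>L. \<mu> x = 0) \<Longrightarrow> \<mu> = (\<lambda>_. 0)"
    using assms(3) unfolding dense_ext_def by blast
  have spM: "assoc_semiprime s (M_alg s br)" using assms(4) unfolding mult_semiprime_def by blast
  have clM: "assoc_subalgebra s (M_alg s br)" unfolding assoc_subalgebra_def M_alg_def
    by (intro conjI ballI allI assoc_gen.zero assoc_gen.add assoc_gen.smult assoc_gen.comp)
  have Mcomp: "\<And>f g. f \<in> M_alg s br \<Longrightarrow> g \<in> M_alg s br \<Longrightarrow> f \<circ> g \<in> M_alg s br"
    using clM unfolding assoc_subalgebra_def by blast
  have idM: "id \<in> M_alg s br" unfolding M_alg_def by (rule assoc_gen.gen) simp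
  have brM: "br x \<in> M_alg s br" for x unfolding M_alg_def by (rule assoc_gen.gen) simp
  have linM: "\<forall>f\<in>M_alg s br. lin s f" using lin_M[OF la] unfolding M_alg_def by blast
  have AM: "A_alg s br \<subseteq> M_alg s br" by (rule A_sub_M)
  have brA0: "br z \<in> A0 s br L" if "z \<in> L" for z
  proof -
    have "br z \<in> A_alg s br" unfolding A_alg_def by (rule assoc_gen.gen) simp
    then show ?thesis unfolding A0_def using that Lbr by blast
  qed
  have sub: "assoc_subalgebra s (A0 s br L)"
    unfolding assoc_subalgebra_def A0_def A_alg_def
  proof (intro conjI ballI allI)
    show "(\<lambda>_. 0) \<in> {\<mu> \<in> assoc_gen s (range br). \<mu> ` L \<subseteq> L}"
      using L0 assoc_gen.zero by blast
  next
    fix f g assume "f \<in> {\<mu> \<in> assoc_gen s (range br). \<mu> ` L \<subseteq> L}"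
      "g \<in> {\<mu> \<in> assoc_gen s (range br). \<mu> ` L \<subseteq> L}"
    then show "(\<lambda>v. f v + g v) \<in> {\<mu> \<in> assoc_gen s (range br). \<mu> ` L \<subseteq> L}"
      using Ladd assoc_gen.add[of f s "range br" g] by blast
  next
    fix c f assume "f \<in> {\<mu> \<in> assoc_gen s (range br). \<mu> ` L \<subseteq> L}"
    then show "(\<lambda>v. s c (f v)) \<in> {\<mu> \<in> assoc_gen s (range br). \<mu> ` L \<subseteq> L}"
      using Lsm assoc_gen.smult[of f s "range br" c] by blast
  next
    fix f g assume fa: "f \<in> {\<mu> \<in> assoc_gen s (range br). \<mu> ` L \<subseteq> L}"
      and ga: "g \<in> {\<mu> \<in> assoc_gen s (range br). \<mu> ` L \<subseteq> L}"
    show "f \<circ> g \<in> {\<mu> \<in> assoc_gen s (range br). \<mu> ` L \<subseteq> L}"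
    proof -
      have "f \<circ> g \<in> assoc_gen s (range br)" using assoc_gen.comp[of f s "range br" g] fa ga by blast
      moreover have "(f \<circ> g) ` L \<subseteq> L"
      proof
        fix w assume "w \<in> (f \<circ> g) ` L"
        then obtain y where "y \<in> L" "w = f (g y)" by auto
        then show "w \<in> L" using fa ga by blast
      qed
      ultimately show ?thesis by blast
    qed
  qed
  have "assoc_semiprime s (A0 s br L)"
    unfolding assoc_semiprime_def
  proof (intro allI impI)
    fix I assume "assoc_ideal s (A0 s br L) I \<and> (\<forall>f\<in>I. \<forall>g\<in>I. f \<circ> g = (\<lambda>_. 0))"
    then have Iid: "assoc_ideal s (A0 s br L) I" and II: "\<forall>f\<in>I. \<forall>g\<in>I. f \<circ> g = (\<lambda>_. 0)" by blast+
    have IA0: "I \<subseteq> A0 s br L" and I0: "(\<lambda>_. 0) \<in> I"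
      and Ileft: "\<And>a f. a \<in> A0 s br L \<Longrightarrow> f \<in> I \<Longrightarrow> a \<circ> f \<in> I"
      using ideal_sub[OF Iid] ideal_zero[OF Iid] ideal_left[OF Iid] by blast+
    have IM: "I \<subseteq> M_alg s br" using IA0 AM unfolding A0_def by blast
    have IL: "\<mu> y \<in> L" if "\<mu> \<in> I" "y \<in> L" for \<mu> y using IA0 that unfolding A0_def by blast
    define Y where "Y = {\<rho> \<in> M_alg s br. \<forall>\<mu>1\<in>I. \<forall>\<mu>2\<in>I. \<forall>v. \<mu>1 (\<rho> (\<mu>2 v)) = 0}"
    have claim: "\<forall>\<rho>\<in>Y. \<rho> \<circ> g \<in> Y" if "g \<in> assoc_gen s (insert id (range br))" for g
      using that
    proof induction
      case (gen g)
      then show ?case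
      proof
        assume "g = id" then show ?thesis by simp
      next
        assume "g \<in> range br"
        then obtain x where gx: "g = br x" by blast
        show ?thesis
        proof
          fix \<rho> assume rY: "\<rho> \<in> Y"
          then have rM: "\<rho> \<in> M_alg s br" unfolding Y_def by blast
          have "\<mu>1 (\<rho> (br x (\<mu>2 v))) = 0" if m1: "\<mu>1 \<in> I" and m2: "\<mu>2 \<in> I" for \<mu>1 \<mu>2 v
          proof -
            have m1M: "\<mu>1 \<in> M_alg s br" and m2M: "\<mu>2 \<in> M_alg s br" using m1 m2 IM by blast+
            have lr: "lin s (\<mu>1 \<circ> \<rho>)" using linM m1M rM lin_comp by blast
            have nu0: "\<mu>1 \<circ> \<rho> \<circ> br (\<mu>2 y) = (\<lambda>_. 0)" if y: "y \<in> L" for y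
            proof (rule dense)
              show "\<mu>1 \<circ> \<rho> \<circ> br (\<mu>2 y) \<in> M_alg s br" using m1M rM brM Mcomp by blast
              show "\<forall>z\<in>L. (\<mu>1 \<circ> \<rho> \<circ> br (\<mu>2 y)) z = 0"
              proof
                fix z assume z: "z \<in> L"
                have "br z \<circ> \<mu>2 \<in> I" using Ileft[OF brA0[OF z] m2] .
                then have "\<mu>1 (\<rho> ((br z \<circ> \<mu>2) y)) = 0" using rY m1 unfolding Y_def by blast
                then have h: "\<mu>1 (\<rho> (br z (\<mu>2 y))) = 0" by simp
                have "(\<mu>1 \<circ> \<rho> \<circ> br (\<mu>2 y)) z = (\<mu>1 \<circ> \<rho>) (- br z (\<mu>2 y))"
                  by (simp only: comp_apply br_anti[OF la, of "\<mu>2 y" z])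
                also have "\<dots> = - (\<mu>1 (\<rho> (br z (\<mu>2 y))))" using lin_minus[OF lr] by simp
                finally show "(\<mu>1 \<circ> \<rho> \<circ> br (\<mu>2 y)) z = 0" using h by simp
              qed
            qed
            have om: "\<mu>1 \<circ> (\<rho> \<circ> br x) \<circ> \<mu>2 = (\<lambda>_. 0)"
            proof (rule dense)
              show "\<mu>1 \<circ> (\<rho> \<circ> br x) \<circ> \<mu>2 \<in> M_alg s br" using m1M rM brM m2M Mcomp by blast
              show "\<forall>y\<in>L. (\<mu>1 \<circ> (\<rho> \<circ> br x) \<circ> \<mu>2) y = 0"
              proof
                fix y assume y: "y \<in> L"
                have "(\<mu>1 \<circ> (\<rho> \<circ> br x) \<circ> \<mu>2) y = (\<mu>1 \<circ> \<rho>) (- br (\<mu>2 y) x)"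
                  by (simp only: comp_apply br_anti[OF la, of x "\<mu>2 y"])
                also have "\<dots> = - ((\<mu>1 \<circ> \<rho> \<circ> br (\<mu>2 y)) x)" using lin_minus[OF lr] by simp
                also have "\<dots> = 0" using fun_cong[OF nu0[OF y], of x] by simp
                finally show "(\<mu>1 \<circ> (\<rho> \<circ> br x) \<circ> \<mu>2) y = 0" .
              qed
            qed
            show ?thesis using fun_cong[OF om, of v] by simp
          qed
          moreover have "\<rho> \<circ> g \<in> M_alg s br" using rM brM Mcomp gx by blast
          ultimately show "\<rho> \<circ> g \<in> Y" unfolding Y_def gx by simp
        qed
      qed
    next
      case zero
      show ?case
      proof
        fix \<rho> assume rY: "\<rho> \<in> Y"
        then have rM: "\<rho> \<in> M_alg s br" unfolding Y_def by blast
        have zM: "(\<lambda>_. 0) \<in> M_alg s br" unfolding M_alg_def by (rule assoc_gen.zero)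
        have "\<mu>1 (\<rho> 0) = 0" if "\<mu>1 \<in> I" for \<mu>1
        proof -
          have "\<mu>1 \<in> M_alg s br" using IM that by blast
          then have "lin s (\<mu>1 \<circ> \<rho>)" using lin_comp linM rM by blast
          from lin_zero[OF this] show ?thesis by simp
        qed
        then show "\<rho> \<circ> (\<lambda>_. 0) \<in> Y" unfolding Y_def using Mcomp[OF rM zM] by simp
      qed
    next
      case (add f g)
      show ?case
      proof
        fix \<rho> assume rY: "\<rho> \<in> Y"
        then have rM: "\<rho> \<in> M_alg s br" unfolding Y_def by blast
        have fY: "\<rho> \<circ> f \<in> Y" and gY: "\<rho> \<circ> g \<in> Y" using add.IH rY by blast+
        have fgM: "(\<lambda>v. f v + g v) \<in> M_alg s br" unfolding M_alg_def using add.hyps by (rule assoc_gen.add)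
        have "\<mu>1 (\<rho> (f (\<mu>2 v) + g (\<mu>2 v))) = 0" if m1: "\<mu>1 \<in> I" and m2: "\<mu>2 \<in> I" for \<mu>1 \<mu>2 v
        proof -
          have "lin s (\<mu>1 \<circ> \<rho>)" using linM IM m1 rM lin_comp by blast
          then have "\<mu>1 (\<rho> (f (\<mu>2 v) + g (\<mu>2 v))) = \<mu>1 (\<rho> (f (\<mu>2 v))) + \<mu>1 (\<rho> (g (\<mu>2 v)))"
            unfolding lin_def by simp
          moreover have "\<mu>1 (\<rho> (f (\<mu>2 v))) = 0" using fY m1 m2 unfolding Y_def by simp
          moreover have "\<mu>1 (\<rho> (g (\<mu>2 v))) = 0" using gY m1 m2 unfolding Y_def by simp
          ultimately show ?thesis by simp
        qed
        then show "\<rho> \<circ> (\<lambda>v. f v + g v) \<in> Y" unfolding Y_def using Mcomp[OF rM fgM] by simp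
      qed
    next
      case (smult f c)
      show ?case
      proof
        fix \<rho> assume rY: "\<rho> \<in> Y"
        then have rM: "\<rho> \<in> M_alg s br" unfolding Y_def by blast
        have fY: "\<rho> \<circ> f \<in> Y" using smult.IH rY by blast
        have fgM: "(\<lambda>v. s c (f v)) \<in> M_alg s br" unfolding M_alg_def using smult.hyps by (rule assoc_gen.smult)
        have "\<mu>1 (\<rho> (s c (f (\<mu>2 v)))) = 0" if m1: "\<mu>1 \<in> I" and m2: "\<mu>2 \<in> I" for \<mu>1 \<mu>2 v
        proof -
          have "lin s (\<mu>1 \<circ> \<rho>)" using linM IM m1 rM lin_comp by blast
          then have "\<mu>1 (\<rho> (s c (f (\<mu>2 v)))) = s c (\<mu>1 (\<rho> (f (\<mu>2 v))))"
            unfolding lin_def by simp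
          moreover have "\<mu>1 (\<rho> (f (\<mu>2 v))) = 0" using fY m1 m2 unfolding Y_def by simp
          ultimately show ?thesis using s0 by simp
        qed
        then show "\<rho> \<circ> (\<lambda>v. s c (f v)) \<in> Y" unfolding Y_def using Mcomp[OF rM fgM] by simp
      qed
    next
      case (comp f g)
      show ?case
      proof
        fix \<rho> assume rY: "\<rho> \<in> Y"
        then have "\<rho> \<circ> f \<in> Y" using comp.IH by blast
        then have "(\<rho> \<circ> f) \<circ> g \<in> Y" using comp.IH by blast
        then show "\<rho> \<circ> (f \<circ> g) \<in> Y" by (simp add: comp_assoc)
      qed
    qed
    have idY: "id \<in> Y"
    proof -
      have "\<mu>1 (\<mu>2 v) = 0" if "\<mu>1 \<in> I" "\<mu>2 \<in> I" for \<mu>1 \<mu>2 v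
        using fun_cong[OF II[rule_format, OF that], of v] by simp
      then show ?thesis unfolding Y_def using idM by simp
    qed
    have MY: "M_alg s br \<subseteq> Y"
    proof
      fix g assume "g \<in> M_alg s br"
      then have "id \<circ> g \<in> Y" using claim idY unfolding M_alg_def by blast
      then show "g \<in> Y" by simp
    qed
    have "\<mu> = (\<lambda>_. 0)" if mu: "\<mu> \<in> I" for \<mu>
    proof (rule semiprime_lemma[OF spM clM idM linM md])
      show "\<mu> \<in> M_alg s br" using mu IM by blast
      show "\<forall>\<rho>\<in>M_alg s br. \<forall>v. \<mu> (\<rho> (\<mu> v)) = 0" using MY mu unfolding Y_def by blast
    qed
    then show "I = {\<lambda>_. 0}" using I0 by blast
  qed
  then show ?thesis using sub by blast
qed

end
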